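(* In the construction below, if there exists an admissible solution $E^*$ of the constructed CSCN instance, then there exists a connected subgraph $H$ of $G'$ with $S\subseteq V(H)$ and $|E(H)|\le 2k$ (an admissible solution of the Steiner Tree instance).
   Context: Let $G'=(V',E')$ be a connected undirected graph, let $S=\{u_1,\dots,u_s\}\subseteq V'$ with $s=|S|$, and let $k\ge 0$ be a real number with $|E'|\ge 2k$. (Viewing every edge of $G'$ as having weight $\frac12$, the Steiner Tree instance asks for a connected subgraph $H$ of $G'$ with $S\subseteq V(H)$ and total edge weight at most $k$, i.e. $|E(H)|\le 2k$.) Let $t\ge 1$ be an integer. Let $V = V'\cup\{v_{i,j} : 1\le i\le s,\ 1\le j\le t\}$ (the $v_{i,j}$ are new vertices) and let $E$ be the set of all pairs of vertices of $V$ (edges undirected). Define $w^*:E\to\mathbb{R}$ by: $w^*(\{v_{i,j},u_i\})=1$ for all $i,j$; $w^*(\{v_{i,j},u\})=0$ for every $u\in V\setminus\{u_i\}$; $w^*(e)=\frac12$ for every $e\in E'$; $w^*(\{u,u'\})=0$ for $u,u'\in V'$ with $\{u,u'\}\notin E'$. Set $A=\frac{st+k}{st+2k}$ and $B=\frac{\frac12(|E'|-2k)}{st+2k}$. For nonempty $E^*\subseteq E$ let $\alpha(E^* )=\frac{\sum_{e\in E^*}w^*(e)}{|E^*|}$ and $\beta(E^* )=\frac{\sum_{e\in E\setminus E^*}w^*(e)}{|E^*|}$. The graph induced by $E^*$ has vertex set the vertices incident to some edge of $E^*$ and edge set $E^*$. An admissible solution of the constructed CSCN instance is a nonempty $E^*\subseteq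 E$ whose induced graph is connected and which satisfies $\alpha(E^* )\ge A$ and $\beta(E^* )\le B$. *)

theory Defs
  imports Complex_Main
begin

(* Undirected simple graphs: vertex set V, edge set F of 2-element vertex sets. *)
definition adj_rel :: "'a set set \<Rightarrow> ('a \<times> 'a) set" where
  "adj_rel F = {(x, y). {x, y} \<in> F}"

definition connected_graph :: "'a set \<Rightarrow> 'a set set \<Rightarrow> bool" where
  "connected_graph V F \<longleftrightarrow> V \<noteq> {} \<and> (\<forall>e\<in>F. e \<subseteq> V \<and> card e = 2) \<and>
     (\<forall>x\<in>V. \<forall>y\<in>V. (x, y) \<in> (adj_rel F)\<^sup>*)"

(* Constructed instance. Vertices: Inl u for u in V', Inr (i,j) for v_{i,j}. *)
definition cscn_V :: "'a set \<Rightarrow> nat \<Rightarrow> nat \<Rightarrow> ('a + nat \<times> nat) set" where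
  "cscn_V V' s t = Inl ` V' \<union> Inr ` ({1..s} \<times> {1..t})"

definition cscn_E :: "'a set \<Rightarrow> nat \<Rightarrow> nat \<Rightarrow> ('a + nat \<times> nat) set set" where
  "cscn_E V' s t = {e. e \<subseteq> cscn_V V' s t \<and> card e = 2}"

(* the weight w^*; u i is the terminal u_i *)
definition wstar :: "'a set set \<Rightarrow> (nat \<Rightarrow> 'a) \<Rightarrow> ('a + nat \<times> nat) set \<Rightarrow> real" where
  "wstar E' u e =
    (if \<exists>i j. e = {Inr (i, j), Inl (u i)} then 1
     else if \<exists>i j x. e = {Inr (i, j), x} then 0
     else if \<exists>a b. e = {Inl a, Inl b} \<and> {a, b} \<in> E' then 1/2
     else 0)"

definition cscn_alpha :: "'a set set \<Rightarrow> (nat \<Rightarrow> 'a) \<Rightarrow> ('a + nat \<times> nat) set set \<Rightarrow> real" where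
  "cscn_alpha E' u Es = (\<Sum>e\<in>Es. wstar E' u e) / real (card Es)"

definition cscn_beta :: "'a set \<Rightarrow> 'a set set \<Rightarrow> (nat \<Rightarrow> 'a) \<Rightarrow> nat \<Rightarrow> nat \<Rightarrow>
    ('a + nat \<times> nat) set set \<Rightarrow> real" where
  "cscn_beta V' E' u s t Es = (\<Sum>e\<in>cscn_E V' s t - Es. wstar E' u e) / real (card Es)"

definition cscn_A :: "nat \<Rightarrow> nat \<Rightarrow> real \<Rightarrow> real" where
  "cscn_A s t k = (real s * real t + k) / (real s * real t + 2 * k)"

definition cscn_B :: "'a set set \<Rightarrow> nat \<Rightarrow> nat \<Rightarrow> real \<Rightarrow> real" where
  "cscn_B E' s t k = ((1/2) * (real (card E') - 2 * k)) / (real s * real t + 2 * k)"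

definition cscn_admissible :: "'a set \<Rightarrow> 'a set set \<Rightarrow> (nat \<Rightarrow> 'a) \<Rightarrow> nat \<Rightarrow> nat \<Rightarrow> real \<Rightarrow>
    ('a + nat \<times> nat) set set \<Rightarrow> bool" where
  "cscn_admissible V' E' u s t k Es \<longleftrightarrow>
     Es \<noteq> {} \<and> Es \<subseteq> cscn_E V' s t \<and> connected_graph (\<Union>Es) Es \<and>
     cscn_alpha E' u Es \<ge> cscn_A s t k \<and> cscn_beta V' E' u s t Es \<le> cscn_B E' s t k"

end

theory Submission imports Defs begin


lemma w_cases: "wstar E' u e = 0 \<or> wstar E' u e = 1/2 \<or> wstar E' u e = 1"
  unfolding wstar_def by auto

lemma w_nonneg: "wstar E' u e \<ge> 0"
  unfolding wstar_def by auto

lemma w_one: "wstar E' u e = 1 \<longleftrightarrow> (\<exists>i j. e = {Inr (i, j), Inl (u i)})"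
  unfolding wstar_def by auto

lemma w_half: "wstar E' u e = 1/2 \<Longrightarrow> \<exists>a b. e = {Inl a, Inl b} \<and> {a, b} \<in> E'"
  unfolding wstar_def by (auto split: if_splits)

lemma w_half_Inl: "{a, b} \<in> E' \<Longrightarrow> wstar E' u {Inl a, Inl b} = 1/2"
  unfolding wstar_def by (auto simp: doubleton_eq_iff)

lemma finite_cscn_E: "finite V' \<Longrightarrow> finite (cscn_E V' s t)"
proof -
  assume "finite V'"
  then have "finite (cscn_V V' s t)" unfolding cscn_V_def by auto
  then show ?thesis unfolding cscn_E_def
    by (rule finite_subset[rotated, OF iffD2[OF finite_Pow_iff]]) auto
qed

lemma T1_eq:
  assumes "inj_on u {1..s}" "u ` {1..s} \<subseteq> V'"
  shows "{e\<in>cscn_E V' s t. wstar E' u e = 1} = (\<lambda>(i,j). {Inr (i, j), Inl (u i)}) ` ({1..s}\<times>{1..t})"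
proof
  show "{e\<in>cscn_E V' s t. wstar E' u e = 1} \<subseteq> (\<lambda>(i,j). {Inr (i, j), Inl (u i)}) ` ({1..s}\<times>{1..t})"
  proof
    fix e assume e0: "e \<in> {e\<in>cscn_E V' s t. wstar E' u e = 1}"
    then have "wstar E' u e = 1" by simp
    then obtain i j where e: "e = {Inr (i, j), Inl (u i)}" using w_one by blast
    have "e \<subseteq> cscn_V V' s t" using e0 unfolding cscn_E_def by simp
    then have "Inr (i, j) \<in> cscn_V V' s t" using e by simp
    then have ij: "(i,j) \<in> {1..s}\<times>{1..t}" unfolding cscn_V_def by auto
    have "e = (\<lambda>(i,j). {Inr (i, j), Inl (u i)}) (i,j)" using e by simp
    then show "e \<in> (\<lambda>(i,j). {Inr (i, j), Inl (u i)}) ` ({1..s}\<times>{1..t})" using ij by (rule image_eqI)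
  qed
next
  show "(\<lambda>(i,j). {Inr (i, j), Inl (u i)}) ` ({1..s}\<times>{1..t}) \<subseteq> {e\<in>cscn_E V' s t. wstar E' u e = 1}"
  proof
    fix e assume "e \<in> (\<lambda>(i,j). {Inr (i, j), Inl (u i)}) ` ({1..s}\<times>{1..t})"
    then obtain i j where ij: "i \<in> {1..s}" "j \<in> {1..t}" and e: "e = {Inr (i, j), Inl (u i)}" by auto
    have ui: "u i \<in> V'" using ij assms(2) by auto
    have "e \<subseteq> cscn_V V' s t" unfolding e cscn_V_def using ij ui by auto
    moreover have "card e = 2" unfolding e by simp
    moreover have "wstar E' u e = 1" unfolding e using w_one by blast
    ultimately show "e \<in> {e\<in>cscn_E V' s t. wstar E' u e = 1}" unfolding cscn_E_def by simp
  qed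
qed

lemma card_T1:
  assumes "inj_on u {1..s}" "u ` {1..s} \<subseteq> V'"
  shows "card {e\<in>cscn_E V' s t. wstar E' u e = 1} = s * t"
proof -
  have "inj_on (\<lambda>(i,j). {Inr (i, j), Inl (u i)}) ({1..s}\<times>{1..t})"
    by (auto simp: inj_on_def doubleton_eq_iff)
  then show ?thesis using T1_eq[OF assms] by (simp add: card_image)
qed

lemma card_H:
  fixes V' :: "'a set"
  assumes "connected_graph V' E'" "finite V'"
  shows "card E' \<le> card {e\<in>cscn_E V' s t. wstar E' u e = 1/2}"
proof -
  have sub: "(\<lambda>e. (Inl ` e :: ('a + nat \<times> nat) set)) ` E' \<subseteq> {e\<in>cscn_E V' s t. wstar E' u e = 1/2}"
  proof
    fix f assume "f \<in> (\<lambda>e. (Inl ` e :: ('a + nat \<times> nat) set)) ` E'"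
    then obtain e where e: "e \<in> E'" "f = Inl ` e" by auto
    then have "e \<subseteq> V'" "card e = 2" using assms(1) unfolding connected_graph_def by auto
    then obtain a b where ab: "e = {a,b}" "a \<noteq> b" by (meson card_2_iff)
    show "f \<in> {e\<in>cscn_E V' s t. wstar E' u e = 1/2}"
      using e ab \<open>e \<subseteq> V'\<close> w_half_Inl[of a b E' u] unfolding cscn_E_def cscn_V_def by auto
  qed
  have "inj_on (\<lambda>e. (Inl ` e :: ('a + nat \<times> nat) set)) E'" by (rule inj_onI) (metis inj_Inl inj_image_eq_iff)
  then have "card ((\<lambda>e. (Inl ` e :: ('a + nat \<times> nat) set)) ` E') = card E'" by (simp add: card_image)
  moreover have "finite {e\<in>cscn_E V' s t. wstar E' u e = 1/2}" using finite_cscn_E[OF assms(2)] by auto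
  ultimately show ?thesis using card_mono[OF _ sub] by simp
qed



lemma core: fixes S K P x y z :: real
assumes "S>0" "K\<ge>0" "P\<ge>K" "x\<ge>0" "y\<ge>0" "z\<ge>0" "x \<le> S" 
 and h1: "(x+y+z)*(S+K) \<le> (x + y/2)*(S+2*K)"
 and h2: "(S - x + P - y/2)*(S+2*K) \<le> (x+y+z)*(P-K)"
shows "x = S \<and> z = 0 \<and> y \<le> 2*K"
proof -
  define a where "a = S - x"
  have a0: "a \<ge> 0" using assms a_def by simp
  have e1: "x*K \<ge> y*S/2 + z*(S+K)" using h1 by (simp add: algebra_simps)
  have e2: "a*(S+2*K+P-K) + 2*P*K + S*K \<le> y*(S/2+P) + z*(P-K)" using h2 unfolding a_def by (simp add: algebra_simps)
  have e3: "y*S*(S+2*P) \<le> 2*((S-a)*K - z*(S+K))*(S+2*P)"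
    using mult_right_mono[OF e1, of "2*(S+2*P)"] assms unfolding a_def by (simp add: algebra_simps)
  have e4: "S*(a*(S+2*K+P-K) + 2*P*K + S*K) \<le> S*(y*(S/2+P) + z*(P-K))"
    using e2 assms by simp
  have e5: "S*a*(S+K+P) + a*K*(S+2*P) + z*(S*(S+K) + 2*P*(S+K) - S*P + S*K) \<le> 0"
    using e3 e4 by (simp add: algebra_simps)
  have p1: "S*a*(S+K+P) \<ge> 0" using assms a0 by simp
  have p2: "a*K*(S+2*P) \<ge> 0" using assms a0 by simp
  have p3: "S*(S+K) + 2*P*(S+K) - S*P + S*K > 0" using assms
  proof -
    have "S*(S+K) + 2*P*(S+K) - S*P + S*K = S*S + 2*S*K + P*S + 2*P*K" by (simp add: algebra_simps)
    moreover have "S*S > 0" "S*K \<ge> 0" "P*S \<ge> 0" "P*K \<ge> 0" using assms by auto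
    ultimately show ?thesis by linarith
  qed
  have "z*(S*(S+K) + 2*P*(S+K) - S*P + S*K) \<ge> 0" using p3 assms by simp
  then have z0: "z*(S*(S+K) + 2*P*(S+K) - S*P + S*K) = 0" and "S*a*(S+K+P) = 0" using e5 p1 p2 by linarith+
  then have "z = 0" "a = 0" using p3 assms by auto
  then show ?thesis using e1 assms a_def by (auto simp: field_simps)
qed

lemma arith_part:
  fixes V' :: "'a set" and E' :: "'a set set" and u :: "nat \<Rightarrow> 'a"
    and s t :: nat and k :: real
    and Es :: "('a + nat \<times> nat) set set"
  assumes "finite V'"
    and "connected_graph V' E'"
    and "inj_on u {1..s}"
    and "u ` {1..s} \<subseteq> V'"
    and "k \<ge> 0"
    and "real (card E') \<ge> 2 * k"
    and "s > 0" "t \<ge> 1"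
    and "cscn_admissible V' E' u s t k Es"
  shows "{e\<in>cscn_E V' s t. wstar E' u e = 1} \<subseteq> Es \<and> (\<forall>e\<in>Es. wstar E' u e \<noteq> 0)
     \<and> real (card {e\<in>Es. wstar E' u e = 1/2}) \<le> 2 * k"
proof -
  let ?W = "wstar E' u"
  let ?CE = "cscn_E V' s t"
  have ne: "Es \<noteq> {}" and sub: "Es \<subseteq> ?CE"
    and al: "cscn_alpha E' u Es \<ge> cscn_A s t k" and be: "cscn_beta V' E' u s t Es \<le> cscn_B E' s t k"
    using assms(9) unfolding cscn_admissible_def by auto
  have fCE: "finite ?CE" using finite_cscn_E[OF assms(1)] .
  have fEs: "finite Es" using finite_subset[OF sub fCE] .
  define X where "X = {e\<in>Es. ?W e = 1}"
  define Y where "Y = {e\<in>Es. ?W e = 1/2}"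
  define Z where "Z = {e\<in>Es. ?W e = 0}"
  define T1 where "T1 = {e\<in>?CE. ?W e = 1}"
  define H where "H = {e\<in>?CE. ?W e = 1/2}"
  have fX: "finite X" "finite Y" "finite Z" using fEs unfolding X_def Y_def Z_def by auto
  have fT: "finite T1" "finite H" using fCE unfolding T1_def H_def by auto
  have EsU: "Es = X \<union> Y \<union> Z" unfolding X_def Y_def Z_def using w_cases[of E' u] by auto
  have d1: "X \<inter> Y = {}" "(X \<union> Y) \<inter> Z = {}" unfolding X_def Y_def Z_def by auto
  have cardEs: "card Es = card X + card Y + card Z"
    using EsU d1 fX by (simp add: card_Un_disjoint)
  have sX: "sum ?W X = card X" unfolding X_def by simp
  have "sum ?W Y = sum (\<lambda>_. 1/2) Y" by (rule sum.cong) (auto simp: Y_def)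
  then have sY: "sum ?W Y = card Y / 2" by simp
  have sZ: "sum ?W Z = 0" unfolding Z_def by simp
  have sumEs: "sum ?W Es = card X + card Y / 2"
    using EsU d1 fX sX sY sZ by (simp add: sum.union_disjoint)
  have cT1: "card T1 = s * t" unfolding T1_def using card_T1[OF assms(3,4)] .
  have cH: "card E' \<le> card H" unfolding H_def using card_H[OF assms(2,1)] .
  have "X \<subseteq> T1" using sub unfolding X_def T1_def by auto
  then have xle: "card X \<le> card T1" using fT by (simp add: card_mono)
  have dTH: "T1 \<inter> H = {}" unfolding T1_def H_def by auto
  have "sum ?W H = sum (\<lambda>_. 1/2) H" by (rule sum.cong) (auto simp: H_def)
  then have sH: "sum ?W H = card H / 2" by simp
  have sT: "sum ?W T1 = card T1" unfolding T1_def by simp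
  have "sum ?W (T1 \<union> H) = card T1 + card H / 2"
    using dTH fT sH sT by (simp add: sum.union_disjoint)
  moreover have "sum ?W (T1 \<union> H) \<le> sum ?W ?CE"
    by (rule sum_mono2[OF fCE]) (auto simp: T1_def H_def w_nonneg)
  ultimately have sCE: "sum ?W ?CE \<ge> real (s*t) + real (card E') / 2" using cT1 cH by simp
  have sC: "sum ?W (?CE - Es) = sum ?W ?CE - sum ?W Es" using sum_diff[OF fCE sub] .
  define S where "S = real s * real t"
  define x where "x = real (card X)"
  define y where "y = real (card Y)"
  define z where "z = real (card Z)"
  define P where "P = real (card E') / 2"
  have Spos: "S > 0" using assms(7,8) unfolding S_def by simp
  have mpos: "x + y + z > 0" using cardEs ne fEs unfolding x_def y_def z_def
    by (metis card_gt_0_iff of_nat_0_less_iff of_nat_add)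
  have Dpos: "S + 2*k > 0" using Spos assms(5) by simp
  have m_eq: "real (card Es) = x + y + z" using cardEs unfolding x_def y_def z_def by simp
  have al2: "(S + k) / (S + 2*k) \<le> (x + y/2) / (x+y+z)"
    using al sumEs m_eq unfolding cscn_alpha_def cscn_A_def S_def x_def y_def by simp
  have h1: "(x+y+z)*(S+k) \<le> (x + y/2)*(S+2*k)"
    using al2 mpos Dpos by (simp add: divide_simps) (simp add: algebra_simps)
  have sCge: "sum ?W (?CE - Es) \<ge> S - x + P - y/2"
    using sC sCE sumEs unfolding S_def x_def y_def P_def by simp
  have be2: "sum ?W (?CE - Es) / (x+y+z) \<le> (P - k) / (S + 2*k)"
    using be m_eq unfolding cscn_beta_def cscn_B_def S_def P_def by (simp add: algebra_simps)
  have "(S - x + P - y/2) / (x+y+z) \<le> (P - k) / (S + 2*k)"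
    using be2 sCge mpos by (meson divide_right_mono less_imp_le order_trans)
  then have h2: "(S - x + P - y/2)*(S+2*k) \<le> (x+y+z)*(P-k)"
    using mpos Dpos by (simp add: divide_simps) (simp add: algebra_simps)
  have xS: "x \<le> S" using xle cT1 unfolding x_def S_def by (metis of_nat_le_iff of_nat_mult)
  have Pk: "P \<ge> k" using assms(6) unfolding P_def by simp
  have c: "x = S \<and> z = 0 \<and> y \<le> 2*k"
    by (rule core[OF Spos assms(5) Pk _ _ _ xS h1 h2]) (auto simp: x_def y_def z_def)
  then have "card X = card T1" using cT1 unfolding x_def S_def by (metis of_nat_eq_iff of_nat_mult)
  then have "X = T1" using \<open>X \<subseteq> T1\<close> fT by (simp add: card_subset_eq)
  moreover have "Z = {}" using c fX unfolding z_def by simp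
  ultimately show ?thesis using c unfolding T1_def X_def Z_def y_def Y_def by auto
qed



theorem lemma4:
  fixes V' :: "'a set" and E' :: "'a set set" and u :: "nat \<Rightarrow> 'a"
    and s t :: nat and k :: real
    and Es :: "('a + nat \<times> nat) set set"
  assumes "finite V'"
    and "connected_graph V' E'"
    and "inj_on u {1..s}"
    and "u ` {1..s} \<subseteq> V'"
    and "k \<ge> 0"
    and "real (card E') \<ge> 2 * k"
    and "t \<ge> 1"
    and "cscn_admissible V' E' u s t k Es"
  shows "\<exists>VH EH. VH \<subseteq> V' \<and> EH \<subseteq> E' \<and> connected_graph VH EH \<and>
           u ` {1..s} \<subseteq> VH \<and> real (card EH) \<le> 2 * k"
proof (cases "s = 0")
  case True
  obtain v where v: "v \<in> V'" using assms(2) unfolding connected_graph_def by auto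
  have "connected_graph {v} {}" unfolding connected_graph_def by auto
  then show ?thesis using True v assms(5) by (intro exI[of _ "{v}"] exI[of _ "{}"]) auto
next
  case False
  let ?W = "wstar E' u"
  have A: "{e\<in>cscn_E V' s t. ?W e = 1} \<subseteq> Es" "\<forall>e\<in>Es. ?W e \<noteq> 0"
     "real (card {e\<in>Es. ?W e = 1/2}) \<le> 2 * k"
    using arith_part[OF assms(1-6) _ assms(7,8)] False by auto
  have ne: "Es \<noteq> {}" and sub: "Es \<subseteq> cscn_E V' s t" and conn: "connected_graph (\<Union>Es) Es"
    using assms(8) unfolding cscn_admissible_def by auto
  define Y where "Y = {e\<in>Es. ?W e = 1/2}"
  define f :: "'a + nat \<times> nat \<Rightarrow> 'a" where "f = case_sum id (\<lambda>(i,j). u i)"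
  define EH where "EH = (\<lambda>e. Inl -` e) ` Y"
  define VH where "VH = f ` (\<Union>Es)"
  have edge: "\<And>e. e \<in> Es \<Longrightarrow> (\<exists>i j. e = {Inr (i, j), Inl (u i)}) \<or> e \<in> Y"
    using A(2) w_cases[of E' u] w_one[of E' u] unfolding Y_def by blast
  have Yform: "\<And>e. e \<in> Y \<Longrightarrow> \<exists>a b. e = {Inl a, Inl b} \<and> {a,b} \<in> E' \<and> a \<noteq> b"
  proof -
    fix e assume e: "e \<in> Y"
    then obtain a b where ab: "e = {Inl a, Inl b}" "{a,b} \<in> E'" using w_half unfolding Y_def by blast
    have "card e = 2" using e sub unfolding Y_def cscn_E_def by auto
    then have "a \<noteq> b" using ab by auto
    then show "\<exists>a b. e = {Inl a, Inl b} \<and> {a,b} \<in> E' \<and> a \<noteq> b" using ab by blast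
  qed
  have fEs: "finite Es" using finite_subset[OF sub finite_cscn_E[OF assms(1)]] .
  have fY: "finite Y" using fEs unfolding Y_def by auto
  have "card EH \<le> card Y" unfolding EH_def by (rule card_image_le[OF fY])
  then have cardEH: "real (card EH) \<le> 2 * k" using A(3) unfolding Y_def
    by (meson of_nat_le_iff order_trans)
  have pre: "\<And>a b. Inl -` {Inl a, Inl b} = {a, b}" by auto
  have EHsub: "EH \<subseteq> E'"
  proof
    fix e assume "e \<in> EH"
    then obtain g where g: "g \<in> Y" "e = Inl -` g" unfolding EH_def by auto
    then obtain a b where ab: "g = {Inl a, Inl b}" "{a,b} \<in> E'" using Yform by blast
    then have "e = {a, b}" using g pre by simp
    then show "e \<in> E'" using ab by simp
  qed
  have fV: "\<And>p. p \<in> \<Union>Es \<Longrightarrow> f p \<in> V'"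
  proof -
    fix p assume "p \<in> \<Union>Es"
    then have "p \<in> cscn_V V' s t" using sub unfolding cscn_E_def by auto
    then show "f p \<in> V'" using assms(4) unfolding cscn_V_def f_def by auto
  qed
  have VHsub: "VH \<subseteq> V'" unfolding VH_def using fV by auto
  have uVH: "u ` {1..s} \<subseteq> VH"
  proof
    fix v assume "v \<in> u ` {1..s}"
    then obtain i where i: "i \<in> {1..s}" "v = u i" by auto
    have ui: "u i \<in> V'" using i assms(4) by auto
    have "{Inr (i, 1), Inl (u i)} \<in> cscn_E V' s t"
      using i ui assms(7) unfolding cscn_E_def cscn_V_def by auto
    moreover have "?W {Inr (i, 1), Inl (u i)} = 1" using w_one by blast
    ultimately have "{Inr (i, 1), Inl (u i)} \<in> Es" using A(1) by blast
    then have "Inl (u i) \<in> \<Union>Es" by blast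
    then show "v \<in> VH" unfolding VH_def f_def using i by force
  qed
  have edge_step: "\<And>p q. (p, q) \<in> adj_rel Es \<Longrightarrow> (f p, f q) \<in> (adj_rel EH)\<^sup>*"
  proof -
    fix p q assume "(p, q) \<in> adj_rel Es"
    then have pq: "{p, q} \<in> Es" unfolding adj_rel_def by auto
    show "(f p, f q) \<in> (adj_rel EH)\<^sup>*"
    proof (cases "{p,q} \<in> Y")
      case True
      then obtain a b where ab: "{p,q} = {Inl a, Inl b}" using Yform by blast
      have "Inl -` {p,q} \<in> EH" unfolding EH_def using True by blast
      then have "{a, b} \<in> EH" using ab pre by metis
      moreover have "{f p, f q} = {a, b}" using ab unfolding f_def by (auto simp: doubleton_eq_iff)
      ultimately have "(f p, f q) \<in> adj_rel EH" unfolding adj_rel_def by simp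
      then show ?thesis by blast
    next
      case False
      then obtain i j where "{p,q} = {Inr (i, j), Inl (u i)}" using edge pq by blast
      then have "f p = f q" unfolding f_def by (auto simp: doubleton_eq_iff)
      then show ?thesis by simp
    qed
  qed
  have reach: "\<And>p q. (p, q) \<in> (adj_rel Es)\<^sup>* \<Longrightarrow> (f p, f q) \<in> (adj_rel EH)\<^sup>*"
  proof -
    fix p q assume "(p, q) \<in> (adj_rel Es)\<^sup>*"
    then show "(f p, f q) \<in> (adj_rel EH)\<^sup>*"
    proof (induction rule: rtrancl_induct)
      case base then show ?case by simp
    next
      case (step y z)
      have "(f y, f z) \<in> (adj_rel EH)\<^sup>*" using edge_step[OF step.hyps(2)] .
      then show ?case using step.IH by (rule rtrancl_trans[rotated])
    qed
  qed
  have cg: "connected_graph VH EH"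
    unfolding connected_graph_def
  proof (intro conjI ballI)
    obtain e where "e \<in> Es" using ne by auto
    then have "card e = 2" using sub unfolding cscn_E_def by auto
    then have "e \<noteq> {}" by auto
    then show "VH \<noteq> {}" unfolding VH_def using \<open>e \<in> Es\<close> by auto
  next
    fix e assume "e \<in> EH"
    then obtain g where g: "g \<in> Y" "e = Inl -` g" unfolding EH_def by auto
    then obtain a b where ab: "g = {Inl a, Inl b}" "a \<noteq> b" using Yform by blast
    then have "e = {a, b}" using g pre by simp
    moreover have "Inl a \<in> \<Union>Es" "Inl b \<in> \<Union>Es" using g ab unfolding Y_def by auto
    moreover have "f (Inl a) = a" "f (Inl b) = b" by (simp_all add: f_def)
    ultimately have "a \<in> VH" "b \<in> VH" unfolding VH_def by (metis image_eqI)+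
    then show "e \<subseteq> VH" using \<open>e = {a, b}\<close> by simp
    show "card e = 2" using \<open>e = {a, b}\<close> ab by simp
  next
    fix x y assume "x \<in> VH" "y \<in> VH"
    then obtain p q where "p \<in> \<Union>Es" "q \<in> \<Union>Es" "x = f p" "y = f q" unfolding VH_def by auto
    moreover have "(p, q) \<in> (adj_rel Es)\<^sup>*" using conn calculation unfolding connected_graph_def by blast
    ultimately show "(x, y) \<in> (adj_rel EH)\<^sup>*" using reach by simp
  qed
  show ?thesis using VHsub EHsub cg uVH cardEH by blast
qed

end
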